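(* Let $x \geq 1$ and $m \geq 1$ be integers. For $k \geq 1$, let $\mathcal{C}_{k,x}$ be the set of binary words of length $k$ containing no pattern from $\mathcal{T}_x = \{0\mathbf{1}^y0,\ 1\mathbf{0}^y1 : 1\le y\le x\}$ as a contiguous substring, listed in increasing lexicographic order (equivalently, increasing order as binary numbers with the leftmost bit most significant), and let $g(k,x,\mathbf{c}) \in \{0,1,\dots,N(k,x)-1\}$ be the position (index, starting from $0$) of $\mathbf{c}$ in this list, where $N(k,x)=|\mathcal{C}_{k,x}|$ for $k\ge 1$ and $N(k,x)\triangleq 2$ for all integers $k\le 1$. Let $\mathbf{c}' \in \mathcal{C}_{m+1,x}$, let $\mathbf{c}$ be the word formed by the $m$ rightmost bits of $\mathbf{c}'$, and (when $m-x\ge 1$) let $\mathbf{c}''$ be the word formed by the $m-x$ rightmost bits of $\mathbf{c}'$. Then: (1) if $\mathbf{c}'$ begins with $00$, then $g(m+1,x,\mathbf{c}') = g(m,x,\mathbf{c})$; (2) if $\mathbf{c}'$ begins with $0\mathbf{1}^{x+1}$, then $g(m+1,x,\mathbf{c}') = g(m,x,\mathbf{c}) - \tfrac12\left[N(m,x)-N(m-x,x)\right]$; (3) if $\mathbf{c}'$ begins with $\mathbf{1}^y\mathbf{0}^{x+1}$ for some $2 \le y \le x+1$, then $g(m+1,x,\mathbf{c}') = g(m,x,\mathbf{c}) + N(m-x,x)$; (4) if $\mathbf{c}'$ begins with $1\mathbf{0}^{x+1}$, then $g(m+1,x,\mathbf{c}') = g(m-x,x,\mathbf{c}'') + \tfrac12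 N(m+1,x)$; (5) if $\mathbf{c}'$ begins with $1\mathbf{1}^{x+1}$, then $g(m+1,x,\mathbf{c}') = g(m-x,x,\mathbf{c}'') + N(m,x)$. (In each case the words $\mathbf{c}$, $\mathbf{c}''$ belong to $\mathcal{C}_{m,x}$, $\mathcal{C}_{m-x,x}$ respectively.)
   Context: $\mathbf{0}^r$ (resp. $\mathbf{1}^r$) denotes a run of $r$ consecutive $0$'s (resp. $1$'s). "Begins with" a pattern means the leftmost bits of the word equal that pattern (so the case is vacuous if the pattern is longer than $m+1$). *)

theory Defs
  imports Complex_Main "HOL-Library.Sublist" "HOL-Library.List_Lexorder"
begin

(* Binary words are bool lists: False = bit 0, True = bit 1, leftmost bit first.
   Lexicographic order on equal-length bool lists (List_Lexorder, False < True)
   is the order as binary numbers with the leftmost bit most significant. *)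

definition forb :: "nat \<Rightarrow> bool list set" where
  "forb x = {[False] @ replicate y True @ [False] | y. 1 \<le> y \<and> y \<le> x}
          \<union> {[True] @ replicate y False @ [True] | y. 1 \<le> y \<and> y \<le> x}"

definition Cw :: "nat \<Rightarrow> nat \<Rightarrow> bool list set" where
  "Cw k x = {w. length w = k \<and> (\<forall>t \<in> forb x. \<not> sublist t w)}"

definition Nw :: "int \<Rightarrow> nat \<Rightarrow> int" where
  "Nw k x = (if k \<le> 1 then 2 else int (card (Cw (nat k) x)))"

definition gw :: "nat \<Rightarrow> nat \<Rightarrow> bool list \<Rightarrow> nat" where
  "gw k x c = card {d \<in> Cw k x. d < c}"

end

theory Submission
  imports Defs
begin


definition VV :: "nat \<Rightarrow> bool list \<Rightarrow> bool" where
  "VV x w \<longleftrightarrow> (\<forall>t \<in> forb x. \<not> sublist t w)"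

lemma Cw_VV: "Cw k x = {w. length w = k \<and> VV x w}"
  by (simp add: Cw_def VV_def)

lemma VV_Cons: "VV x (b#w) \<longleftrightarrow> VV x w \<and>
   \<not>(\<exists>y. 1\<le>y \<and> y\<le>x \<and> prefix (replicate y (\<not>b) @ [b]) w)"
proof -
  have "VV x (b#w) \<longleftrightarrow> VV x w \<and> (\<forall>t\<in>forb x. \<not> prefix t (b#w))"
    unfolding VV_def sublist_Cons_right by blast
  moreover have "(\<forall>t\<in>forb x. \<not> prefix t (b#w)) \<longleftrightarrow>
     \<not>(\<exists>y. 1\<le>y \<and> y\<le>x \<and> prefix (replicate y (\<not>b) @ [b]) w)"
  proof -
    have mem: "t \<in> forb x \<longleftrightarrow> (\<exists>a y. 1\<le>y \<and> y\<le>x \<and> t = a # replicate y (\<not>a) @ [a])" for t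
    proof
      assume "t \<in> forb x" then show "\<exists>a y. 1\<le>y \<and> y\<le>x \<and> t = a # replicate y (\<not>a) @ [a]"
        unfolding forb_def by auto
    next
      assume "\<exists>a y. 1\<le>y \<and> y\<le>x \<and> t = a # replicate y (\<not>a) @ [a]"
      then obtain a y where "1\<le>y" "y\<le>x" "t = a # replicate y (\<not>a) @ [a]" by blast
      then show "t \<in> forb x" unfolding forb_def by (cases a) auto
    qed
    show ?thesis
    proof
      assume h: "\<forall>t\<in>forb x. \<not> prefix t (b#w)"
      show "\<not>(\<exists>y. 1\<le>y \<and> y\<le>x \<and> prefix (replicate y (\<not>b) @ [b]) w)"
      proof
        assume "\<exists>y. 1\<le>y \<and> y\<le>x \<and> prefix (replicate y (\<not>b) @ [b]) w"
        then obtain y where y: "1\<le>y" "y\<le>x" "prefix (replicate y (\<not>b) @ [b]) w" by blast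
        then have "b # replicate y (\<not>b) @ [b] \<in> forb x" using mem by blast
        moreover have "prefix (b # replicate y (\<not>b) @ [b]) (b#w)" using y by simp
        ultimately show False using h by blast
      qed
    next
      assume h: "\<not>(\<exists>y. 1\<le>y \<and> y\<le>x \<and> prefix (replicate y (\<not>b) @ [b]) w)"
      show "\<forall>t\<in>forb x. \<not> prefix t (b#w)"
      proof (intro ballI notI)
        fix t assume "t \<in> forb x" "prefix t (b#w)"
        then obtain a y where "1\<le>y" "y\<le>x" "t = a # replicate y (\<not>a) @ [a]"
          "prefix (a # replicate y (\<not>a) @ [a]) (b#w)" using mem by blast
        with h show False by auto
      qed
    qed
  qed
  ultimately show ?thesis by blast
qed

lemma VV_same: "VV x (b # b # w) \<longleftrightarrow> VV x (b#w)"
  unfolding VV_Cons[of x b "b#w"] by (auto simp: Suc_le_eq dest!: not0_implies_Suc)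

lemma VV_rep0: "VV x (replicate (Suc j) b @ w) \<longleftrightarrow> VV x (b # w)"
proof (induction j)
  case 0 then show ?case by simp
next
  case (Suc j)
  have "replicate (Suc (Suc j)) b @ w = b # b # (replicate j b @ w)" by simp
  then have "VV x (replicate (Suc (Suc j)) b @ w) = VV x (b # (replicate j b @ w))"
    using VV_same by simp
  then show ?case using Suc by simp
qed

lemma VV_rep: "VV x (replicate j b @ b # w) \<longleftrightarrow> VV x (b # w)"
proof (cases j)
  case 0 then show ?thesis by simp
next
  case (Suc i)
  then show ?thesis using VV_rep0[of x i b "b#w"] VV_same[of x b w] by simp
qed

lemma VV_tl: "VV x (b#w) \<Longrightarrow> VV x w"
  using VV_Cons[of x b w] by simp

lemma runs: "length e \<ge> n \<Longrightarrow> prefix (replicate n a) e \<or> (\<exists>y<n. prefix (replicate y a @ [\<not>a]) e)"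
proof (induction n arbitrary: e)
  case 0 then show ?case by simp
next
  case (Suc n)
  then obtain c e' where e: "e = c # e'" by (cases e) auto
  show ?case
  proof (cases "c = a")
    case True
    with Suc.IH[of e'] Suc.prems e show ?thesis by auto
  next
    case False
    then have "prefix (replicate 0 a @ [\<not>a]) e" using e by auto
    then show ?thesis by blast
  qed
qed

lemma runs_excl: "y<n \<Longrightarrow> prefix (replicate y a @ [\<not>a]) e \<Longrightarrow> \<not> prefix (replicate n a) e"
proof (induction y arbitrary: n e)
  case 0 then show ?case by (cases n; cases e) auto
next
  case (Suc y)
  then show ?case by (cases n; cases e) auto
qed

lemma lt_prefix: "prefix (p @ [False]) e \<Longrightarrow> prefix (p @ [True]) c \<Longrightarrow> e < c"
proof (induction p arbitrary: e c)
  case Nil then show ?case by (cases e; cases c) auto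
next
  case (Cons a p) then show ?case by (cases e; cases c) auto
qed

lemma lt_rep: "(replicate j (b::bool) @ f < replicate j b @ g) \<longleftrightarrow> f < g"
  by (induction j) (auto simp: less_bool_def)

lemma VV_map_Not: "VV x (map Not w) \<longleftrightarrow> VV x w"
proof -
  have fb: "t \<in> forb x \<Longrightarrow> map Not t \<in> forb x" for t
    unfolding forb_def by auto
  have 1: "VV x w \<Longrightarrow> VV x (map Not w)" for w
  proof -
    assume h: "VV x w"
    show "VV x (map Not w)" unfolding VV_def
    proof
      fix t assume t: "t \<in> forb x"
      show "\<not> sublist t (map Not w)"
      proof
        assume "sublist t (map Not w)"
        then have "sublist (map Not t) (map Not (map Not w))" by (rule map_mono_sublist)
        then have "sublist (map Not t) w" by (simp add: comp_def)
        with h fb[OF t] show False unfolding VV_def by blast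
      qed
    qed
  qed
  show ?thesis using 1[of w] 1[of "map Not w"] by (auto simp: comp_def)
qed

lemma fin_C: "finite (Cw k x)"
proof -
  have "Cw k x \<subseteq> {w. set w \<subseteq> UNIV \<and> length w = k}" by (auto simp: Cw_def)
  moreover have "finite {w::bool list. set w \<subseteq> UNIV \<and> length w = k}"
    by (rule finite_lists_length_eq) simp
  ultimately show ?thesis by (rule finite_subset)
qed

definition Hb :: "nat \<Rightarrow> nat \<Rightarrow> bool \<Rightarrow> nat" where
  "Hb k x b = card {e \<in> Cw k x. hd e = b}"

lemma Hb_sym: "k \<ge> 1 \<Longrightarrow> Hb k x False = Hb k x True"
proof -
  assume k: "k \<ge> 1"
  have img: "(map Not) ` {e \<in> Cw k x. hd e = False} = {e \<in> Cw k x. hd e = True}"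
  proof (intro equalityI subsetI)
    fix e assume "e \<in> map Not ` {e \<in> Cw k x. hd e = False}"
    then obtain f where f: "f \<in> Cw k x" "hd f = False" "e = map Not f" by auto
    then have "f \<noteq> []" using k by (auto simp: Cw_def)
    have "hd e = True" using f \<open>f \<noteq> []\<close> by (simp add: hd_map)
    moreover have "e \<in> Cw k x" using f by (simp add: Cw_VV VV_map_Not)
    ultimately show "e \<in> {e \<in> Cw k x. hd e = True}" by simp
  next
    fix e assume e: "e \<in> {e \<in> Cw k x. hd e = True}"
    then have "e \<noteq> []" using k by (auto simp: Cw_def)
    with e have "map Not e \<in> {e \<in> Cw k x. hd e = False}"
      by (simp add: Cw_VV VV_map_Not hd_map)
    moreover have "e = map Not (map Not e)" by (simp add: comp_def)
    ultimately show "e \<in> map Not ` {e \<in> Cw k x. hd e = False}" by blast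
  qed
  have inj: "inj_on (map Not) A" for A
  proof (rule inj_onI)
    fix a b assume "map Not a = map Not b"
    then have "map Not (map Not a) = map Not (map Not b)" by simp
    then show "a = b" by (simp add: comp_def)
  qed
  have "card ((map Not) ` {e \<in> Cw k x. hd e = False}) = card {e \<in> Cw k x. hd e = False}"
    by (rule card_image[OF inj])
  then have "card {e \<in> Cw k x. hd e = True} = card {e \<in> Cw k x. hd e = False}"
    unfolding img .
  then show ?thesis unfolding Hb_def by simp
qed

lemma card_C: "card (Cw k x) = Hb k x False + Hb k x True"
proof -
  have "Cw k x = {e \<in> Cw k x. hd e = False} \<union> {e \<in> Cw k x. hd e = True}" by auto
  moreover have "card ({e \<in> Cw k x. hd e = False} \<union> {e \<in> Cw k x. hd e = True})
     = card {e \<in> Cw k x. hd e = False} + card {e \<in> Cw k x. hd e = True}"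
    by (rule card_Un_disjoint) (use fin_C in auto)
  ultimately show ?thesis unfolding Hb_def by simp
qed

lemma card_C1: "card (Cw 1 x) = 2"
proof -
  have "Cw 1 x = {[False],[True]}"
  proof (intro equalityI subsetI)
    fix w assume "w \<in> Cw 1 x"
    then obtain a where "w = [a]" by (auto simp: Cw_def length_Suc_conv)
    then show "w \<in> {[False],[True]}" by (cases a) auto
  next
    fix w assume w: "w \<in> {[False],[True]}"
    have "t \<in> forb x \<Longrightarrow> length t \<ge> 3" for t unfolding forb_def by auto
    then have "t \<in> forb x \<Longrightarrow> \<not> sublist t w" for t
      using w sublist_length_le by fastforce
    with w show "w \<in> Cw 1 x" by (auto simp: Cw_def)
  qed
  then show ?thesis by simp
qed

lemma Nw_eq: "k \<ge> 1 \<Longrightarrow> Nw (int k) x = 2 * int (Hb k x b)"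
proof -
  assume k: "k \<ge> 1"
  have "card (Cw k x) = 2 * Hb k x b" using card_C Hb_sym[OF k] by (cases b) auto
  moreover have "Nw (int k) x = int (card (Cw k x))"
    using k card_C1 by (auto simp: Nw_def)
  ultimately show ?thesis by simp
qed



lemma C_len: "e \<in> Cw k x \<Longrightarrow> length e = k" by (simp add: Cw_def)
lemma C_VV: "e \<in> Cw k x \<Longrightarrow> VV x e" by (simp add: Cw_VV)

lemma VV_Cons_hd: "e \<noteq> [] \<Longrightarrow> hd e = b \<Longrightarrow> VV x (b#e) \<longleftrightarrow> VV x e"
  by (cases e) (auto simp: VV_same)

lemma R: assumes "m \<ge> x+1" "e \<in> Cw m x" "hd e = (\<not>b)"
  shows "VV x (b#e) \<longleftrightarrow> prefix (replicate (x+1) (\<not>b)) e"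
proof -
  have ve: "VV x e" and le: "length e = m" using assms(2) by (auto simp: Cw_VV)
  have ne: "e \<noteq> []" using le assms(1) by auto
  show ?thesis
  proof
    assume v: "VV x (b#e)"
    have "prefix (replicate (x+1) (\<not>b)) e \<or> (\<exists>y<x+1. prefix (replicate y (\<not>b) @ [\<not>\<not>b]) e)"
      using runs[of "x+1" e "\<not>b"] le assms(1) by simp
    moreover have "\<not> prefix (replicate 0 (\<not>b) @ [b]) e"
      using ne assms(3) by (cases e) auto
    moreover have "\<not> (\<exists>y. 1\<le>y \<and> y\<le>x \<and> prefix (replicate y (\<not>b) @ [b]) e)"
      using v VV_Cons by blast
    ultimately show "prefix (replicate (x+1) (\<not>b)) e"
    proof (elim disjE exE conjE)
      fix y assume y: "y < x+1" "prefix (replicate y (\<not>b) @ [\<not>\<not>b]) e"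
        and n0: "\<not> prefix (replicate 0 (\<not>b) @ [b]) e"
        and nn: "\<not> (\<exists>y. 1\<le>y \<and> y\<le>x \<and> prefix (replicate y (\<not>b) @ [b]) e)"
      show ?thesis
      proof (cases "y = 0")
        case True then show ?thesis using y n0 by simp
      next
        case False then show ?thesis using y nn by auto
      qed
    qed
  next
    assume p: "prefix (replicate (x+1) (\<not>b)) e"
    have "\<not> (\<exists>y. 1\<le>y \<and> y\<le>x \<and> prefix (replicate y (\<not>b) @ [b]) e)"
    proof
      assume "\<exists>y. 1\<le>y \<and> y\<le>x \<and> prefix (replicate y (\<not>b) @ [b]) e"
      then obtain y where y: "y \<le> x" "prefix (replicate y (\<not>b) @ [\<not>\<not>b]) e" by auto
      then show False using runs_excl[of y "x+1" "\<not>b" e] p by simp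
    qed
    then show "VV x (b#e)" using ve VV_Cons by blast
  qed
qed

lemma shift:
  assumes "k \<ge> 1"
  shows "{e \<in> Cw (k+j) x. prefix (replicate (j+1) b) e \<and> Q e}
       = (\<lambda>f. replicate j b @ f) ` {f \<in> Cw k x. hd f = b \<and> Q (replicate j b @ f)}"
proof (intro equalityI subsetI)
  fix e assume e: "e \<in> {e \<in> Cw (k+j) x. prefix (replicate (j+1) b) e \<and> Q e}"
  then obtain r where r: "e = replicate (j+1) b @ r" by (auto simp: prefix_def)
  have e2: "e = replicate j b @ (b # r)" using r by (simp add: replicate_app_Cons_same)
  have "VV x e" using e by (simp add: Cw_VV)
  then have "VV x (b#r)" using e2 VV_rep by simp
  moreover have "length (b#r) = k" using e e2 by (simp add: Cw_def)
  ultimately have "b#r \<in> {f \<in> Cw k x. hd f = b \<and> Q (replicate j b @ f)}"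
    using e e2 by (simp add: Cw_VV)
  then show "e \<in> (\<lambda>f. replicate j b @ f) ` {f \<in> Cw k x. hd f = b \<and> Q (replicate j b @ f)}"
    using e2 by blast
next
  fix e assume "e \<in> (\<lambda>f. replicate j b @ f) ` {f \<in> Cw k x. hd f = b \<and> Q (replicate j b @ f)}"
  then obtain f where f: "f \<in> Cw k x" "hd f = b" "Q (replicate j b @ f)" "e = replicate j b @ f"
    by blast
  then have "f \<noteq> []" using assms by (auto simp: Cw_def)
  then obtain r where r: "f = b # r" using f(2) by (cases f) auto
  have "VV x e" using f r VV_rep by (simp add: Cw_VV)
  moreover have "length e = k + j" using f by (simp add: Cw_def)
  moreover have "prefix (replicate (j+1) b) e" using f(4) r
    by (simp add: replicate_app_Cons_same)
  ultimately show "e \<in> {e \<in> Cw (k+j) x. prefix (replicate (j+1) b) e \<and> Q e}"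
    using f by (simp add: Cw_VV)
qed

lemma shift_card:
  assumes "k \<ge> 1"
  shows "card {e \<in> Cw (k+j) x. prefix (replicate (j+1) b) e \<and> Q e}
       = card {f \<in> Cw k x. hd f = b \<and> Q (replicate j b @ f)}"
proof -
  have "inj_on (\<lambda>f. replicate j b @ f) A" for A by (rule inj_onI) simp
  then show ?thesis unfolding shift[OF assms] by (rule card_image)
qed

lemma pref_card:
  assumes "m \<ge> x+1"
  shows "card {e \<in> Cw m x. prefix (replicate (x+1) b) e} = Hb (m-x) x b"
  using shift_card[of "m-x" x x b "\<lambda>_. True"] assms unfolding Hb_def by simp

lemma gw_F: "length c = m \<Longrightarrow> gw (m+1) x (False#c) = card {e\<in>Cw m x. e<c \<and> VV x (False#e)}"
proof -
  assume lc: "length c = m"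
  have "{d \<in> Cw (m+1) x. d < False#c} = Cons False ` {e\<in>Cw m x. e<c \<and> VV x (False#e)}"
  proof (intro equalityI subsetI)
    fix d assume d: "d \<in> {d \<in> Cw (m+1) x. d < False#c}"
    then obtain a e where de: "d = a # e" by (cases d) (auto simp: Cw_def)
    then show "d \<in> Cons False ` {e\<in>Cw m x. e<c \<and> VV x (False#e)}"
      using d VV_tl[of x a e] by (auto simp: Cw_VV)
  next
    fix d assume "d \<in> Cons False ` {e\<in>Cw m x. e<c \<and> VV x (False#e)}"
    then show "d \<in> {d \<in> Cw (m+1) x. d < False#c}" by (auto simp: Cw_VV)
  qed
  then show ?thesis unfolding gw_def by (simp add: card_image)
qed

lemma gw_T: "length c = m \<Longrightarrow>
  gw (m+1) x (True#c) = Hb (m+1) x False + card {e\<in>Cw m x. e<c \<and> VV x (True#e)}"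
proof -
  assume lc: "length c = m"
  have eq: "{d \<in> Cw (m+1) x. d < True#c} = {d \<in> Cw (m+1) x. hd d = False} \<union>
      Cons True ` {e\<in>Cw m x. e<c \<and> VV x (True#e)}"
  proof (intro equalityI subsetI)
    fix d assume d: "d \<in> {d \<in> Cw (m+1) x. d < True#c}"
    then obtain a e where de: "d = a # e" by (cases d) (auto simp: Cw_def)
    then show "d \<in> {d \<in> Cw (m+1) x. hd d = False} \<union> Cons True ` {e\<in>Cw m x. e<c \<and> VV x (True#e)}"
      using d VV_tl[of x a e] by (cases a) (auto simp: Cw_VV)
  next
    fix d assume "d \<in> {d \<in> Cw (m+1) x. hd d = False} \<union> Cons True ` {e\<in>Cw m x. e<c \<and> VV x (True#e)}"
    then show "d \<in> {d \<in> Cw (m+1) x. d < True#c}"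
    proof
      assume d: "d \<in> {d \<in> Cw (m+1) x. hd d = False}"
      then obtain e where "d = False # e" by (cases d) (auto simp: Cw_def)
      then show ?thesis using d by simp
    qed (auto simp: Cw_VV)
  qed
  have "card ({d \<in> Cw (m+1) x. hd d = False} \<union> Cons True ` {e\<in>Cw m x. e<c \<and> VV x (True#e)})
     = card {d \<in> Cw (m+1) x. hd d = False} + card (Cons True ` {e\<in>Cw m x. e<c \<and> VV x (True#e)})"
    by (rule card_Un_disjoint) (auto intro: finite_subset[OF _ fin_C])
  then show ?thesis unfolding gw_def eq Hb_def by (simp add: card_image)
qed

lemma gw_hdT: assumes "c \<noteq> []" "hd c = True" "k \<ge> 1"
  shows "gw k x c = Hb k x False + card {e\<in>Cw k x. hd e = True \<and> e < c}"
proof -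
  have eq: "{e\<in>Cw k x. e < c} = {e\<in>Cw k x. hd e = False} \<union> {e\<in>Cw k x. hd e = True \<and> e < c}"
  proof (intro equalityI subsetI)
    fix e assume "e \<in> {e\<in>Cw k x. hd e = False} \<union> {e\<in>Cw k x. hd e = True \<and> e < c}"
    moreover have "e \<in> Cw k x \<Longrightarrow> e \<noteq> []" using assms(3) by (auto simp: Cw_def)
    ultimately show "e \<in> {e\<in>Cw k x. e < c}" using assms(1,2)
      by (cases e; cases c) auto
  qed auto
  have "card ({e\<in>Cw k x. hd e = False} \<union> {e\<in>Cw k x. hd e = True \<and> e < c}) =
     card {e\<in>Cw k x. hd e = False} + card {e\<in>Cw k x. hd e = True \<and> e < c}"
    by (rule card_Un_disjoint) (auto intro: finite_subset[OF _ fin_C])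
  then show ?thesis unfolding gw_def eq Hb_def .
qed

lemma gw_hdF: assumes "c \<noteq> []" "hd c = False" "k \<ge> 1"
  shows "gw k x c = card {e\<in>Cw k x. hd e = False \<and> e < c}"
proof -
  have "{e\<in>Cw k x. e < c} = {e\<in>Cw k x. hd e = False \<and> e < c}"
  proof (intro equalityI subsetI)
    fix e assume e: "e \<in> {e\<in>Cw k x. e < c}"
    then have "e \<noteq> []" using assms(3) by (auto simp: Cw_def)
    then show "e \<in> {e\<in>Cw k x. hd e = False \<and> e < c}" using e assms(1,2)
      by (cases e; cases c) auto
  qed auto
  then show ?thesis unfolding gw_def by simp
qed

lemma recur: assumes "m \<ge> x+1"
  shows "Hb (m+1) x b = Hb m x b + Hb (m-x) x (\<not>b)"
proof -
  have eq: "{d \<in> Cw (m+1) x. hd d = b} = Cons b ` ({e\<in>Cw m x. hd e = b} \<union>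
            {e \<in> Cw m x. prefix (replicate (x+1) (\<not>b)) e})"
  proof (intro equalityI subsetI)
    fix d assume d: "d \<in> {d \<in> Cw (m+1) x. hd d = b}"
    then obtain e where de: "d = b # e" by (cases d) (auto simp: Cw_def)
    have v: "VV x (b#e)" and le: "length e = m" using d de by (auto simp: Cw_VV)
    then have ve: "e \<in> Cw m x" using VV_tl by (simp add: Cw_VV)
    have ne: "e \<noteq> []" using le assms by auto
    have "hd e = b \<or> hd e = (\<not>b)" by auto
    then have "e \<in> {e\<in>Cw m x. hd e = b} \<union> {e \<in> Cw m x. prefix (replicate (x+1) (\<not>b)) e}"
      using R[OF assms ve] v ve by auto
    then show "d \<in> Cons b ` ({e\<in>Cw m x. hd e = b} \<union>
            {e \<in> Cw m x. prefix (replicate (x+1) (\<not>b)) e})" using de by blast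
  next
    fix d assume "d \<in> Cons b ` ({e\<in>Cw m x. hd e = b} \<union>
            {e \<in> Cw m x. prefix (replicate (x+1) (\<not>b)) e})"
    then obtain e where de: "d = b # e" and
      e: "e \<in> {e\<in>Cw m x. hd e = b} \<union> {e \<in> Cw m x. prefix (replicate (x+1) (\<not>b)) e}" by blast
    have ve: "e \<in> Cw m x" using e by blast
    have ne: "e \<noteq> []" using ve assms by (auto simp: Cw_def)
    have "VV x (b#e)"
    proof (cases "hd e = b")
      case True then show ?thesis using VV_Cons_hd[OF ne] ve by (simp add: Cw_VV)
    next
      case False
      then have "hd e = (\<not>b)" by auto
      moreover have "prefix (replicate (x+1) (\<not>b)) e" using e False by auto
      ultimately show ?thesis using R[OF assms ve] by simp
    qed
    then show "d \<in> {d \<in> Cw (m+1) x. hd d = b}" using de ve by (simp add: Cw_VV)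
  qed
  have disj: "{e\<in>Cw m x. hd e = b} \<inter> {e \<in> Cw m x. prefix (replicate (x+1) (\<not>b)) e} = {}"
    by (auto simp: prefix_def)
  have "card ({e\<in>Cw m x. hd e = b} \<union> {e \<in> Cw m x. prefix (replicate (x+1) (\<not>b)) e})
     = card {e\<in>Cw m x. hd e = b} + card {e \<in> Cw m x. prefix (replicate (x+1) (\<not>b)) e}"
    by (rule card_Un_disjoint) (use disj in \<open>auto intro: finite_subset[OF _ fin_C]\<close>)
  then show ?thesis unfolding Hb_def eq using pref_card[OF assms, of "\<not>b"]
    by (simp add: card_image Hb_def)
qed



lemma splitT: assumes "length c = m" "m \<ge> 1" "c \<noteq> []" "hd c = True"
  shows "card {e\<in>Cw m x. e<c \<and> VV x (True#e)} =
    card {e\<in>Cw m x. hd e = False \<and> VV x (True#e)} + card {e\<in>Cw m x. hd e = True \<and> e<c}"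
proof -
  have eq: "{e\<in>Cw m x. e<c \<and> VV x (True#e)} =
    {e\<in>Cw m x. hd e = False \<and> VV x (True#e)} \<union> {e\<in>Cw m x. hd e = True \<and> e<c}"
  proof (intro equalityI subsetI)
    fix e assume e: "e \<in> {e\<in>Cw m x. e<c \<and> VV x (True#e)}"
    then show "e \<in> {e\<in>Cw m x. hd e = False \<and> VV x (True#e)} \<union> {e\<in>Cw m x. hd e = True \<and> e<c}"
      by (cases "hd e") auto
  next
    fix e assume e: "e \<in> {e\<in>Cw m x. hd e = False \<and> VV x (True#e)} \<union> {e\<in>Cw m x. hd e = True \<and> e<c}"
    then have ne: "e \<noteq> []" using assms(2) by (auto simp: Cw_def)
    show "e \<in> {e\<in>Cw m x. e<c \<and> VV x (True#e)}"
      using e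
    proof
      assume e1: "e \<in> {e\<in>Cw m x. hd e = False \<and> VV x (True#e)}"
      then have "e < c" using ne assms(3,4) by (cases e; cases c) auto
      then show ?thesis using e1 by simp
    next
      assume e2: "e \<in> {e\<in>Cw m x. hd e = True \<and> e<c}"
      then show ?thesis using VV_Cons_hd[OF ne, of True x] by (simp add: Cw_VV)
    qed
  qed
  have "card ({e\<in>Cw m x. hd e = False \<and> VV x (True#e)} \<union> {e\<in>Cw m x. hd e = True \<and> e<c}) =
    card {e\<in>Cw m x. hd e = False \<and> VV x (True#e)} + card {e\<in>Cw m x. hd e = True \<and> e<c}"
    by (rule card_Un_disjoint) (auto intro: finite_subset[OF _ fin_C])
  then show ?thesis unfolding eq .
qed

lemma A1card: assumes "m \<ge> x+1"
  shows "card {e\<in>Cw m x. hd e = (\<not>b) \<and> VV x (b#e)} = Hb (m-x) x (\<not>b)"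
proof -
  have "{e\<in>Cw m x. hd e = (\<not>b) \<and> VV x (b#e)} = {e \<in> Cw m x. prefix (replicate (x+1) (\<not>b)) e}"
  proof (intro equalityI subsetI)
    fix e assume "e \<in> {e\<in>Cw m x. hd e = (\<not>b) \<and> VV x (b#e)}"
    then show "e \<in> {e \<in> Cw m x. prefix (replicate (x+1) (\<not>b)) e}" using R[OF assms] by blast
  next
    fix e assume e: "e \<in> {e \<in> Cw m x. prefix (replicate (x+1) (\<not>b)) e}"
    then have "hd e = (\<not>b)" by (auto simp: prefix_def)
    then show "e \<in> {e\<in>Cw m x. hd e = (\<not>b) \<and> VV x (b#e)}" using R[OF assms] e by blast
  qed
  then show ?thesis using pref_card[OF assms] by simp
qed


lemma pref_rep: "y < n \<Longrightarrow> prefix (replicate y a @ [a]) (replicate n a @ r)"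
proof -
  assume "y < n"
  then obtain d where "n = Suc (y + d)" unfolding less_iff_Suc_add by blast
  then have n: "n = Suc y + d" by simp
  have "replicate n a = replicate (Suc y) a @ replicate d a" unfolding n by (rule replicate_add)
  also have "replicate (Suc y) a = replicate y a @ [a]" by (simp add: replicate_append_same)
  finally have "replicate n a @ r = (replicate y a @ [a]) @ (replicate d a @ r)" by simp
  then show ?thesis by (rule prefixI)
qed

lemma lowT: assumes "length e \<ge> x+1" "\<not> prefix (replicate (x+1) True) e"
  shows "e < replicate (x+1) True @ r"
proof -
  obtain y where y: "y < x+1" "prefix (replicate y True @ [False]) e"
  proof -
    have "prefix (replicate (x+1) True) e \<or> (\<exists>y<x+1. prefix (replicate y True @ [\<not>True]) e)"
      using runs[of "x+1" e True] assms(1) by blast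
    then have "\<exists>y<x+1. prefix (replicate y True @ [False]) e" using assms(2) by simp
    then show ?thesis using that by blast
  qed
  have "prefix (replicate y True @ [True]) (replicate (x+1) True @ r)" using y(1) by (rule pref_rep)
  then show ?thesis using y(2) by (rule lt_prefix[rotated])
qed


lemma P3: assumes "m \<ge> x+1"
  shows "card {e\<in>Cw m x. hd e = True \<and> \<not> prefix (replicate (x+1) True) e} + Hb (m-x) x True = Hb m x True"
proof -
  have eq: "{e\<in>Cw m x. hd e = True} = {e\<in>Cw m x. hd e = True \<and> \<not> prefix (replicate (x+1) True) e}
     \<union> {e\<in>Cw m x. prefix (replicate (x+1) True) e}"
    by (auto simp: prefix_def)
  have "card ({e\<in>Cw m x. hd e = True \<and> \<not> prefix (replicate (x+1) True) e}
     \<union> {e\<in>Cw m x. prefix (replicate (x+1) True) e}) = card {e\<in>Cw m x. hd e = True \<and> \<not> prefix (replicate (x+1) True) e}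
     + card {e\<in>Cw m x. prefix (replicate (x+1) True) e}"
    by (rule card_Un_disjoint) (auto intro: finite_subset[OF _ fin_C])
  then show ?thesis using pref_card[OF assms, of True] unfolding Hb_def eq by simp
qed

lemma P2: assumes "m \<ge> x+1" "c = replicate (x+1) True @ r"
  shows "card {e\<in>Cw m x. hd e = True \<and> e<c} = card {e\<in>Cw m x. hd e = True \<and> \<not> prefix (replicate (x+1) True) e}
    + card {e\<in>Cw m x. prefix (replicate (x+1) True) e \<and> e<c}"
proof -
  have eq: "{e\<in>Cw m x. hd e = True \<and> e<c} = {e\<in>Cw m x. hd e = True \<and> \<not> prefix (replicate (x+1) True) e}
    \<union> {e\<in>Cw m x. prefix (replicate (x+1) True) e \<and> e<c}"
  proof (intro equalityI subsetI)
    fix e assume "e \<in> {e\<in>Cw m x. hd e = True \<and> e<c}"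
    then show "e \<in> {e\<in>Cw m x. hd e = True \<and> \<not> prefix (replicate (x+1) True) e}
    \<union> {e\<in>Cw m x. prefix (replicate (x+1) True) e \<and> e<c}" by blast
  next
    fix e assume e: "e \<in> {e\<in>Cw m x. hd e = True \<and> \<not> prefix (replicate (x+1) True) e}
    \<union> {e\<in>Cw m x. prefix (replicate (x+1) True) e \<and> e<c}"
    have le: "length e \<ge> x+1" using e assms(1) by (auto simp: Cw_def)
    show "e \<in> {e\<in>Cw m x. hd e = True \<and> e<c}"
      using e
    proof
      assume "e \<in> {e\<in>Cw m x. hd e = True \<and> \<not> prefix (replicate (x+1) True) e}"
      then show ?thesis using lowT[OF le] assms(2) by auto
    next
      assume "e \<in> {e\<in>Cw m x. prefix (replicate (x+1) True) e \<and> e<c}"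
      then show ?thesis by (auto simp: prefix_def)
    qed
  qed
  have "card ({e\<in>Cw m x. hd e = True \<and> \<not> prefix (replicate (x+1) True) e}
    \<union> {e\<in>Cw m x. prefix (replicate (x+1) True) e \<and> e<c}) =
    card {e\<in>Cw m x. hd e = True \<and> \<not> prefix (replicate (x+1) True) e}
    + card {e\<in>Cw m x. prefix (replicate (x+1) True) e \<and> e<c}"
    by (rule card_Un_disjoint) (auto intro: finite_subset[OF _ fin_C])
  then show ?thesis unfolding eq .
qed



lemma case1: assumes "m \<ge> 1" "c' \<in> Cw (m+1) x" "prefix [False, False] c'"
  shows "gw (m + 1) x c' = gw m x (drop 1 c')"
proof -
  obtain r where c': "c' = False # False # r" using assms(3) by (auto simp: prefix_def)
  have lr: "length (False # r) = m" using assms(2) c' by (simp add: Cw_def)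
  have "{e\<in>Cw m x. e < False # r \<and> VV x (False#e)} = {e\<in>Cw m x. e < False # r}"
  proof (intro equalityI subsetI)
    fix e assume e: "e \<in> {e\<in>Cw m x. e < False # r}"
    then have "e \<noteq> []" using assms(1) by (auto simp: Cw_def)
    then obtain a s where es: "e = a # s" by (cases e) auto
    then have "a = False" using e by auto
    then show "e \<in> {e\<in>Cw m x. e < False # r \<and> VV x (False#e)}"
      using e es VV_Cons_hd[of e False x] by (simp add: Cw_VV)
  qed auto
  then show ?thesis using gw_F[OF lr] c' unfolding gw_def by simp
qed

lemma case2: assumes "m \<ge> 1" "c' \<in> Cw (m+1) x" "prefix ([False] @ replicate (x + 1) True) c'"
  shows "real (gw (m + 1) x c') = real (gw m x (drop 1 c'))
           - (real_of_int (Nw (int m) x) - real_of_int (Nw (int m - int x) x)) / 2"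
proof -
  obtain r where c': "c' = False # (replicate (x+1) True @ r)" using assms(3) by (auto simp: prefix_def)
  define c where "c = replicate (x+1) True @ r"
  have lc: "length c = m" using assms(2) c' by (simp add: Cw_def c_def)
  have mx: "m \<ge> x+1" using lc c_def by simp
  have g1: "gw (m+1) x c' = card {e\<in>Cw m x. e<c \<and> VV x (False#e)}"
    using gw_F[OF lc] c' c_def by simp
  have B: "{e\<in>Cw m x. e<c \<and> \<not> VV x (False#e)} = {e\<in>Cw m x. hd e = True \<and> \<not> prefix (replicate (x+1) True) e}"
  proof (intro equalityI subsetI)
    fix e assume e: "e \<in> {e\<in>Cw m x. e<c \<and> \<not> VV x (False#e)}"
    then have ne: "e \<noteq> []" and ec: "e \<in> Cw m x" using assms(1) by (auto simp: Cw_def)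
    have "hd e = True"
    proof (rule ccontr)
      assume "hd e \<noteq> True"
      then have "hd e = False" by simp
      then show False using VV_Cons_hd[OF ne, of False x] e by (auto simp: Cw_VV)
    qed
    then show "e \<in> {e\<in>Cw m x. hd e = True \<and> \<not> prefix (replicate (x+1) True) e}"
      using R[OF mx ec, of False] e by simp
  next
    fix e assume e: "e \<in> {e\<in>Cw m x. hd e = True \<and> \<not> prefix (replicate (x+1) True) e}"
    then have ec: "e \<in> Cw m x" and le: "length e \<ge> x+1" using mx by (auto simp: Cw_def)
    have "e < c" using lowT[OF le] e c_def by simp
    then show "e \<in> {e\<in>Cw m x. e<c \<and> \<not> VV x (False#e)}"
      using R[OF mx ec, of False] e by simp
  qed
  have eq: "{e\<in>Cw m x. e<c} = {e\<in>Cw m x. e<c \<and> VV x (False#e)} \<union> {e\<in>Cw m x. e<c \<and> \<not> VV x (False#e)}"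
    by auto
  have "card ({e\<in>Cw m x. e<c \<and> VV x (False#e)} \<union> {e\<in>Cw m x. e<c \<and> \<not> VV x (False#e)}) =
     card {e\<in>Cw m x. e<c \<and> VV x (False#e)} + card {e\<in>Cw m x. e<c \<and> \<not> VV x (False#e)}"
    by (rule card_Un_disjoint) (auto intro: finite_subset[OF _ fin_C])
  then have g2: "gw m x c = gw (m+1) x c' + card {e\<in>Cw m x. hd e = True \<and> \<not> prefix (replicate (x+1) True) e}"
    unfolding gw_def eq using g1 B unfolding gw_def by simp
  have p3: "card {e\<in>Cw m x. hd e = True \<and> \<not> prefix (replicate (x+1) True) e} + Hb (m-x) x True = Hb m x True"
    by (rule P3[OF mx])
  have n1: "Nw (int m) x = 2 * int (Hb m x True)" using Nw_eq assms(1) by blast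
  have "int m - int x = int (m - x)" using mx by simp
  moreover have "m - x \<ge> 1" using mx by simp
  ultimately have n2: "Nw (int m - int x) x = 2 * int (Hb (m-x) x True)" using Nw_eq by simp
  have dc: "drop 1 c' = c" using c' c_def by simp
  show ?thesis unfolding dc n1 n2 using g2 p3
    by (simp add: of_nat_diff)
qed


lemma case3: assumes "m \<ge> 1" "c' \<in> Cw (m+1) x" "2 \<le> y" "y \<le> x + 1"
   "prefix (replicate y True @ replicate (x + 1) False) c'"
  shows "int (gw (m + 1) x c') = int (gw m x (drop 1 c')) + Nw (int m - int x) x"
proof -
  obtain r where c'0: "c' = replicate y True @ replicate (x+1) False @ r"
    using assms(5) by (auto simp: prefix_def)
  define y' where "y' = y - 2"
  have y: "y = Suc (Suc y')" using assms(3) y'_def by simp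
  define c where "c = replicate (Suc y') True @ replicate (x+1) False @ r"
  have c': "c' = True # c" using c'0 y c_def by simp
  have lc: "length c = m" using assms(2) c' by (simp add: Cw_def)
  have mx: "m \<ge> x+1" using lc c_def by simp
  have cne: "c \<noteq> []" "hd c = True" using c_def by auto
  have g1: "gw (m+1) x c' = Hb (m+1) x False + card {e\<in>Cw m x. e<c \<and> VV x (True#e)}"
    using gw_T[OF lc] c' by simp
  have sp: "card {e\<in>Cw m x. e<c \<and> VV x (True#e)} =
    card {e\<in>Cw m x. hd e = False \<and> VV x (True#e)} + card {e\<in>Cw m x. hd e = True \<and> e<c}"
    by (rule splitT[OF lc assms(1) cne])
  have a1: "card {e\<in>Cw m x. hd e = False \<and> VV x (True#e)} = Hb (m-x) x False"
    using A1card[OF mx, of True] by simp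
  have g2: "gw m x c = Hb m x False + card {e\<in>Cw m x. hd e = True \<and> e<c}"
    by (rule gw_hdT[OF cne assms(1)])
  have rc: "Hb (m+1) x False = Hb m x False + Hb (m-x) x True" using recur[OF mx, of False] by simp
  have m1: "m - x \<ge> 1" using mx by simp
  have hs: "Hb (m-x) x False = Hb (m-x) x True" by (rule Hb_sym[OF m1])
  have n2': "Nw (int (m-x)) x = 2 * int (Hb (m-x) x True)" by (rule Nw_eq[OF m1])
  have "int m - int x = int (m - x)" using mx by simp
  then have n2: "Nw (int m - int x) x = 2 * int (Hb (m-x) x True)" using n2' by metis
  have dc: "drop 1 c' = c" using c' by simp
  have "gw (m+1) x c' = gw m x c + 2 * Hb (m-x) x True" using g1 sp a1 g2 rc hs by linarith
  then show ?thesis unfolding dc n2 by simp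
qed

lemma case4: assumes "m \<ge> 1" "c' \<in> Cw (m+1) x" "prefix ([True] @ replicate (x + 1) False) c'"
  shows "real (gw (m + 1) x c') = real (gw (m - x) x (drop (x + 1) c')) + real_of_int (Nw (int m + 1) x) / 2"
proof -
  obtain r where c'0: "c' = True # replicate (x+1) False @ r"
    using assms(3) by (auto simp: prefix_def)
  define c where "c = replicate (x+1) False @ r"
  have c': "c' = True # c" using c'0 c_def by simp
  have c2: "c = replicate x False @ (False # r)" using c_def by (simp add: replicate_app_Cons_same)
  have lc: "length c = m" using assms(2) c' by (simp add: Cw_def)
  have mx: "m \<ge> x+1" using lc c_def by simp
  have m1: "m - x \<ge> 1" using mx by simp
  have g1: "gw (m+1) x c' = Hb (m+1) x False + card {e\<in>Cw m x. e<c \<and> VV x (True#e)}"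
    using gw_T[OF lc] c' by simp
  have A: "{e\<in>Cw m x. e<c \<and> VV x (True#e)} = {e\<in>Cw (m-x+x) x. prefix (replicate (x+1) False) e \<and> e<c}"
  proof (intro equalityI subsetI)
    fix e assume e: "e \<in> {e\<in>Cw m x. e<c \<and> VV x (True#e)}"
    then have ne: "e \<noteq> []" and ec: "e \<in> Cw m x" using assms(1) by (auto simp: Cw_def)
    have "hd e = False" using ne e c_def by (cases e) auto
    then show "e \<in> {e\<in>Cw (m-x+x) x. prefix (replicate (x+1) False) e \<and> e<c}"
      using R[OF mx ec, of True] e mx by simp
  next
    fix e assume e: "e \<in> {e\<in>Cw (m-x+x) x. prefix (replicate (x+1) False) e \<and> e<c}"
    then have ec: "e \<in> Cw m x" using mx by simp
    have "hd e = False" using e by (auto simp: prefix_def)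
    then show "e \<in> {e\<in>Cw m x. e<c \<and> VV x (True#e)}"
      using R[OF mx ec, of True] e ec by simp
  qed
  have sh: "card {e\<in>Cw (m-x+x) x. prefix (replicate (x+1) False) e \<and> e<c} =
     card {f\<in>Cw (m-x) x. hd f = False \<and> replicate x False @ f < c}"
    by (rule shift_card[OF m1])
  have "{f\<in>Cw (m-x) x. hd f = False \<and> replicate x False @ f < c} = {f\<in>Cw (m-x) x. hd f = False \<and> f < False # r}"
    unfolding c2 lt_rep ..
  moreover have "gw (m-x) x (False # r) = card {f\<in>Cw (m-x) x. hd f = False \<and> f < False # r}"
    by (rule gw_hdF[OF _ _ m1]) auto
  moreover have "drop (x+1) c' = False # r" using c' unfolding c2 by simp
  moreover have "Nw (int m + 1) x = 2 * int (Hb (m+1) x False)"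
    using Nw_eq[of "m+1" x False] by (simp add: add.commute)
  ultimately show ?thesis using g1 A sh by simp
qed

lemma case5: assumes "m \<ge> 1" "c' \<in> Cw (m+1) x" "prefix ([True] @ replicate (x + 1) True) c'"
  shows "int (gw (m + 1) x c') = int (gw (m - x) x (drop (x + 1) c')) + Nw (int m) x"
proof -
  obtain r where c'0: "c' = True # replicate (x+1) True @ r"
    using assms(3) by (auto simp: prefix_def)
  define c where "c = replicate (x+1) True @ r"
  have c': "c' = True # c" using c'0 c_def by simp
  have c2: "c = replicate x True @ (True # r)" using c_def by (simp add: replicate_app_Cons_same)
  have lc: "length c = m" using assms(2) c' by (simp add: Cw_def)
  have mx: "m \<ge> x+1" using lc c_def by simp
  have m1: "m - x \<ge> 1" using mx by simp
  have cne: "c \<noteq> []" "hd c = True" using c_def by auto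
  have g1: "gw (m+1) x c' = Hb (m+1) x False + card {e\<in>Cw m x. e<c \<and> VV x (True#e)}"
    using gw_T[OF lc] c' by simp
  have sp: "card {e\<in>Cw m x. e<c \<and> VV x (True#e)} =
    card {e\<in>Cw m x. hd e = False \<and> VV x (True#e)} + card {e\<in>Cw m x. hd e = True \<and> e<c}"
    by (rule splitT[OF lc assms(1) cne])
  have a1: "card {e\<in>Cw m x. hd e = False \<and> VV x (True#e)} = Hb (m-x) x False"
    using A1card[OF mx, of True] by simp
  have p2: "card {e\<in>Cw m x. hd e = True \<and> e<c} = card {e\<in>Cw m x. hd e = True \<and> \<not> prefix (replicate (x+1) True) e}
    + card {e\<in>Cw m x. prefix (replicate (x+1) True) e \<and> e<c}"
    by (rule P2[OF mx c_def])
  have p3: "card {e\<in>Cw m x. hd e = True \<and> \<not> prefix (replicate (x+1) True) e} + Hb (m-x) x True = Hb m x True"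
    by (rule P3[OF mx])
  have sh: "card {e\<in>Cw (m-x+x) x. prefix (replicate (x+1) True) e \<and> e<c} =
     card {f\<in>Cw (m-x) x. hd f = True \<and> replicate x True @ f < c}"
    by (rule shift_card[OF m1])
  have mm: "m - x + x = m" using mx by simp
  have "{f\<in>Cw (m-x) x. hd f = True \<and> replicate x True @ f < c} = {f\<in>Cw (m-x) x. hd f = True \<and> f < True # r}"
    unfolding c2 lt_rep ..
  with sh mm have d: "card {e\<in>Cw m x. prefix (replicate (x+1) True) e \<and> e<c} =
     card {f\<in>Cw (m-x) x. hd f = True \<and> f < True # r}" by simp
  have g2: "gw (m-x) x (True # r) = Hb (m-x) x False + card {f\<in>Cw (m-x) x. hd f = True \<and> f < True # r}"
    by (rule gw_hdT[OF _ _ m1]) auto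
  have dc: "drop (x+1) c' = True # r" using c' unfolding c2 by simp
  have rc: "Hb (m+1) x False = Hb m x False + Hb (m-x) x True" using recur[OF mx, of False] by simp
  have hs: "Hb (m-x) x False = Hb (m-x) x True" by (rule Hb_sym[OF m1])
  have hs2: "Hb m x False = Hb m x True" by (rule Hb_sym[OF assms(1)])
  have n1: "Nw (int m) x = 2 * int (Hb m x True)" using Nw_eq[OF assms(1)] by blast
  have "gw (m+1) x c' = gw (m-x) x (True # r) + 2 * Hb m x True"
    using g1 sp a1 p2 p3 d g2 rc hs hs2 by linarith
  then show ?thesis unfolding dc n1 by simp
qed



theorem lemma1:
  fixes x m :: nat and c' :: "bool list"
  assumes "x \<ge> 1" and "m \<ge> 1" and "c' \<in> Cw (m + 1) x"
  defines "c \<equiv> drop 1 c'" and "c'' \<equiv> drop (x + 1) c'"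
  shows
   "(prefix [False, False] c' \<longrightarrow> gw (m + 1) x c' = gw m x c)
    \<and> (prefix ([False] @ replicate (x + 1) True) c' \<longrightarrow>
         real (gw (m + 1) x c') = real (gw m x c)
           - (real_of_int (Nw (int m) x) - real_of_int (Nw (int m - int x) x)) / 2)
    \<and> (\<forall>y. 2 \<le> y \<and> y \<le> x + 1 \<and> prefix (replicate y True @ replicate (x + 1) False) c' \<longrightarrow>
         int (gw (m + 1) x c') = int (gw m x c) + Nw (int m - int x) x)
    \<and> (prefix ([True] @ replicate (x + 1) False) c' \<longrightarrow>
         real (gw (m + 1) x c') = real (gw (m - x) x c'') + real_of_int (Nw (int m + 1) x) / 2)
    \<and> (prefix ([True] @ replicate (x + 1) True) c' \<longrightarrow>
         int (gw (m + 1) x c') = int (gw (m - x) x c'') + Nw (int m) x)"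
  proof (intro conjI allI impI)
  assume "prefix [False, False] c'"
  then show "gw (m + 1) x c' = gw m x c" unfolding c_def by (rule case1[OF assms(2,3)])
next
  assume "prefix ([False] @ replicate (x + 1) True) c'"
  then show "real (gw (m + 1) x c') = real (gw m x c)
           - (real_of_int (Nw (int m) x) - real_of_int (Nw (int m - int x) x)) / 2"
    unfolding c_def by (rule case2[OF assms(2,3)])
next
  fix y assume "2 \<le> y \<and> y \<le> x + 1 \<and> prefix (replicate y True @ replicate (x + 1) False) c'"
  then show "int (gw (m + 1) x c') = int (gw m x c) + Nw (int m - int x) x"
    unfolding c_def using case3[OF assms(2,3)] by blast
next
  assume "prefix ([True] @ replicate (x + 1) False) c'"
  then show "real (gw (m + 1) x c') = real (gw (m - x) x c'') + real_of_int (Nw (int m + 1) x) / 2"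
    unfolding c''_def by (rule case4[OF assms(2,3)])
next
  assume "prefix ([True] @ replicate (x + 1) True) c'"
  then show "int (gw (m + 1) x c') = int (gw (m - x) x c'') + Nw (int m) x"
    unfolding c''_def by (rule case5[OF assms(2,3)])
qed

end
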